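(* Let $A$ be a commutative ring with at least $4$ elements, and let $\tilde{\mathcal P}(A)=\mathrm{coker}(\delta:\mathbb Z[X_5]\to\mathbb Z[X_4])$, a right $\mathrm{GL}_2(A)$-module. Then $\mathcal{RP}(A)\cong\tilde{\mathcal P}(A)_{\mathrm{SL}_2(A)}$ as $\mathcal R_A$-modules, and $\mathcal P(A)\cong\tilde{\mathcal P}(A)_{\mathrm{GL}_2(A)}$ as abelian groups. Explicitly, the class of $(\bar{\mathbf u}_1,\ldots,\bar{\mathbf u}_4)$ corresponds to $\left\langle\frac{d(\mathbf u_1,\mathbf u_3)d(\mathbf u_1,\mathbf u_2)}{d(\mathbf u_2,\mathbf u_3)}\right\rangle\left[\frac{d(\mathbf u_1,\mathbf u_4)d(\mathbf u_2,\mathbf u_3)}{d(\mathbf u_2,\mathbf u_4)d(\mathbf u_1,\mathbf u_3)}\right]$, where $d(\mathbf u,\mathbf v)$ is the determinant of the matrix with rows $\mathbf u,\mathbf v$.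
   Context: For a commutative ring $A$: $A^\times$ units; $G_A=A^\times/(A^\times)^2$ with classes $\langle x\rangle$; $\mathcal R_A=\mathbb Z[G_A]$; $W_A=\{u\in A^\times:1-u\in A^\times\}$. $\mathcal{RP}(A)$ is the $\mathcal R_A$-module generated by $[x]$, $x\in W_A$, with relations $[x]-[y]+\langle x\rangle[y/x]-\langle x^{-1}-1\rangle\left[\frac{1-x^{-1}}{1-y^{-1}}\right]+\langle 1-x\rangle\left[\frac{1-x}{1-y}\right]=0$ for $x,y,y/x\in W_A$; $\mathcal P(A)$ is the abelian group with the same generators and relations with all $\langle\cdot\rangle$ replaced by $1$. $U_2$ is the set of unimodular rows in $A^2$; $\tilde X_n\subset U_2^n$ consists of tuples with any two rows forming an invertible matrix; $X_n=\tilde X_n/(A^\times)^n$, with $\mathrm{GL}_2(A)$ acting on the right diagonally; $\delta$ is the simplicial boundary $\delta(\bar{\mathbf u}_1,\ldots,\bar{\mathbf u}_{n+1})=\sum_i(-1)^{i+1}(\ldots,\widehat{\bar{\mathbf u}_i},\ldots)$. The coinvariants $\tilde{\mathcal P}(A)_{\mathrm{SL}_2(A)}$ are an $\mathcal R_A$-module with $\langle a\rangle$ acting via any matrix of determinant $a$. *)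

theory Defs
  imports Main "HOL-Library.Poly_Mapping"
begin

text \<open>The free abelian group Z[S] is modelled as the finitely supported
  functions 'b =>0 int whose support (keys) lies in S; generators are frag_of x,
  homomorphisms out of it are frag_extend.\<close>

definition free_ab :: "'b set \<Rightarrow> ('b \<Rightarrow>\<^sub>0 int) set" where
  "free_ab S = {z. Poly_Mapping.keys z \<subseteq> S}"

inductive_set gen_subgroup :: "('b \<Rightarrow>\<^sub>0 int) set \<Rightarrow> ('b \<Rightarrow>\<^sub>0 int) set"
  for R where
  gen_zero: "0 \<in> gen_subgroup R"
| gen_base: "r \<in> R \<Longrightarrow> r \<in> gen_subgroup R"
| gen_diff: "x \<in> gen_subgroup R \<Longrightarrow> y \<in> gen_subgroup R \<Longrightarrow> x - y \<in> gen_subgroup R"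

definition units :: "'a::comm_ring_1 set" where
  "units = {a. a dvd 1}"

definition uinv :: "'a::comm_ring_1 \<Rightarrow> 'a" where
  "uinv a = (THE b. a * b = 1)"

definition Wset :: "'a::comm_ring_1 set" where
  "Wset = {u. u dvd 1 \<and> (1 - u) dvd 1}"

text \<open>The class <a> in G_A = A^x / (A^x)^2, as a subset of A.\<close>
definition sqclass :: "'a::comm_ring_1 \<Rightarrow> 'a set" where
  "sqclass a = {a * b * b | b. b dvd 1}"

definition G_A :: "'a::comm_ring_1 set set" where
  "G_A = sqclass ` units"

definition gact :: "'a::comm_ring_1 \<Rightarrow> 'a set \<Rightarrow> 'a set" where
  "gact a g = (\<lambda>c. a * c) ` g"

text \<open>RP(A) as an abelian group is Z[G_A x W_A] modulo the R_A-submodule generated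
  by the defining relations; the generator (<g>, x) stands for <g>[x].
  The R_A-submodule generated by the relations is the subgroup generated by
  all their translates <g> * relation, g a unit.\<close>

definition rel_RP :: "'a::comm_ring_1 \<Rightarrow> 'a \<Rightarrow> 'a \<Rightarrow> (('a set \<times> 'a) \<Rightarrow>\<^sub>0 int)" where
  "rel_RP g x y =
     frag_of (sqclass g, x) - frag_of (sqclass g, y)
     + frag_of (sqclass (g * x), y * uinv x)
     - frag_of (sqclass (g * (uinv x - 1)), (1 - uinv x) * uinv (1 - uinv y))
     + frag_of (sqclass (g * (1 - x)), (1 - x) * uinv (1 - y))"

definition N_RP :: "(('a::comm_ring_1 set \<times> 'a) \<Rightarrow>\<^sub>0 int) set" where
  "N_RP = gen_subgroup {rel_RP g x y | g x y. g dvd 1 \<and> x \<in> Wset \<and> y \<in> Wset \<and> y * uinv x \<in> Wset}"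

definition rel_P :: "'a::comm_ring_1 \<Rightarrow> 'a \<Rightarrow> ('a \<Rightarrow>\<^sub>0 int)" where
  "rel_P x y =
     frag_of x - frag_of y + frag_of (y * uinv x)
     - frag_of ((1 - uinv x) * uinv (1 - uinv y))
     + frag_of ((1 - x) * uinv (1 - y))"

definition N_P :: "('a::comm_ring_1 \<Rightarrow>\<^sub>0 int) set" where
  "N_P = gen_subgroup {rel_P x y | x y. x \<in> Wset \<and> y \<in> Wset \<and> y * uinv x \<in> Wset}"

text \<open>Action of <a> on Z[G_A x W_A] (the R_A-module structure of RP(A)).\<close>
definition RP_act :: "'a::comm_ring_1 \<Rightarrow> (('a set \<times> 'a) \<Rightarrow>\<^sub>0 int) \<Rightarrow> (('a set \<times> 'a) \<Rightarrow>\<^sub>0 int)" where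
  "RP_act a = frag_extend (\<lambda>(g, x). frag_of (gact a g, x))"

type_synonym 'a row = "'a \<times> 'a"

definition d2 :: "'a::comm_ring_1 row \<Rightarrow> 'a row \<Rightarrow> 'a" where
  "d2 u v = fst u * snd v - snd u * fst v"

definition unimodular :: "'a::comm_ring_1 row \<Rightarrow> bool" where
  "unimodular u \<longleftrightarrow> (\<exists>c d. fst u * c + snd u * d = 1)"

definition rclass :: "'a::comm_ring_1 row \<Rightarrow> 'a row set" where
  "rclass u = {(t * fst u, t * snd u) | t. t dvd 1}"

text \<open>X_n = tilde X_n / (A^x)^n, as lists of row classes.\<close>
definition Xn :: "nat \<Rightarrow> 'a::comm_ring_1 row set list set" where
  "Xn n = {map rclass us | us. length us = n \<and> (\<forall>i<n. unimodular (us ! i)) \<and>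
             (\<forall>i<n. \<forall>j<n. i \<noteq> j \<longrightarrow> d2 (us ! i) (us ! j) dvd 1)}"

definition rep :: "'a row set \<Rightarrow> 'a row" where
  "rep c = (SOME u. u \<in> c)"

text \<open>Simplicial boundary delta : Z[X_{n+1}] -> Z[X_n] on a generator
  (0-based indexing: sign (-1)^i for deleting entry i).\<close>
definition bdry :: "'a row set list \<Rightarrow> ('a row set list \<Rightarrow>\<^sub>0 int)" where
  "bdry cs = (\<Sum>i<length cs. frag_cmul ((-1) ^ i) (frag_of (take i cs @ drop (Suc i) cs)))"

text \<open>2x2 matrices ((m11, m12), (m21, m22)) given by their rows.\<close>
type_synonym 'a mat2 = "'a row \<times> 'a row"

definition mdet :: "'a::comm_ring_1 mat2 \<Rightarrow> 'a" where
  "mdet M = d2 (fst M) (snd M)"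

text \<open>Right action of a matrix on a row: u |-> u M.\<close>
definition rowmul :: "'a::comm_ring_1 row \<Rightarrow> 'a mat2 \<Rightarrow> 'a row" where
  "rowmul u M = (fst u * fst (fst M) + snd u * fst (snd M),
                 fst u * snd (fst M) + snd u * snd (snd M))"

definition GL2 :: "'a::comm_ring_1 mat2 set" where
  "GL2 = {M. mdet M dvd 1}"

definition SL2 :: "'a::comm_ring_1 mat2 set" where
  "SL2 = {M. mdet M = 1}"

definition conf_act :: "'a::comm_ring_1 mat2 \<Rightarrow> ('a row set list \<Rightarrow>\<^sub>0 int) \<Rightarrow> ('a row set list \<Rightarrow>\<^sub>0 int)" where
  "conf_act M = frag_extend (\<lambda>cs. frag_of (map (\<lambda>c. (\<lambda>u. rowmul u M) ` c) cs))"

definition N_delta :: "('a::comm_ring_1 row set list \<Rightarrow>\<^sub>0 int) set" where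
  "N_delta = gen_subgroup (bdry ` Xn 5)"

text \<open>Kernel of Z[X_4] -> tilde P(A)_H for a subgroup H of GL_2(A):
  image of delta plus the span of the elements x.M - x.\<close>
definition N_coinv :: "'a::comm_ring_1 mat2 set \<Rightarrow> ('a row set list \<Rightarrow>\<^sub>0 int) set" where
  "N_coinv H = gen_subgroup (bdry ` Xn 5 \<union>
      {conf_act M (frag_of cs) - frag_of cs | M cs. M \<in> H \<and> cs \<in> Xn 4})"

definition cr_arg :: "'a::comm_ring_1 row set list \<Rightarrow> 'a" where
  "cr_arg cs = (let u = (\<lambda>i. rep (cs ! i)) in
     d2 (u 0) (u 3) * d2 (u 1) (u 2) * uinv (d2 (u 1) (u 3) * d2 (u 0) (u 2)))"

definition cls_arg :: "'a::comm_ring_1 row set list \<Rightarrow> 'a" where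
  "cls_arg cs = (let u = (\<lambda>i. rep (cs ! i)) in
     d2 (u 0) (u 2) * d2 (u 0) (u 1) * uinv (d2 (u 1) (u 2)))"

definition Phi :: "('a::comm_ring_1 row set list \<Rightarrow>\<^sub>0 int) \<Rightarrow> (('a set \<times> 'a) \<Rightarrow>\<^sub>0 int)" where
  "Phi = frag_extend (\<lambda>cs. if cs \<in> Xn 4 then frag_of (sqclass (cls_arg cs), cr_arg cs) else 0)"

definition Psi :: "('a::comm_ring_1 row set list \<Rightarrow>\<^sub>0 int) \<Rightarrow> ('a \<Rightarrow>\<^sub>0 int)" where
  "Psi = frag_extend (\<lambda>cs. if cs \<in> Xn 4 then frag_of (cr_arg cs) else 0)"

end

theory Submission
  imports Defs
begin


lemma umult[simp]: "((a::'a::comm_ring_1) * b) dvd 1 \<longleftrightarrow> a dvd 1 \<and> b dvd 1"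
  by (auto dest: dvd_mult_left dvd_mult_right intro: mult_dvd_mono[of a 1 b 1, simplified])

lemma uneg[simp]: "(- (a::'a::comm_ring_1)) dvd 1 \<longleftrightarrow> a dvd 1"
  by simp

lemma uinv_r: "(a::'a::comm_ring_1) dvd 1 \<Longrightarrow> a * uinv a = 1"
proof -
  assume "a dvd 1"
  then obtain b where b: "1 = a * b" by (auto elim: dvdE)
  have "a * (THE b. a * b = 1) = 1"
  proof (rule theI[where P="\<lambda>b. a * b = 1"])
    show "a * b = 1" using b by simp
    fix c assume "a * c = 1"
    then show "c = b" by (metis b mult.assoc mult.commute mult_1_right)
  qed
  then show ?thesis by (simp add: uinv_def)
qed

lemma uinv_eq: "(a::'a::comm_ring_1) * b = 1 \<Longrightarrow> uinv a = b"
proof -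
  assume h: "a * b = 1"
  then have "a dvd 1" by (metis dvdI)
  then have "a * uinv a = 1" by (rule uinv_r)
  then show ?thesis by (metis h mult.assoc mult.commute mult_1_right)
qed

lemma uinv_l: "(a::'a::comm_ring_1) dvd 1 \<Longrightarrow> uinv a * a = 1"
  using uinv_r by (metis mult.commute)

lemma uinv_unit: "(a::'a::comm_ring_1) dvd 1 \<Longrightarrow> uinv a dvd 1"
  using uinv_l by (metis dvdI)

lemma uinv_mult: "(a::'a::comm_ring_1) dvd 1 \<Longrightarrow> b dvd 1 \<Longrightarrow> uinv (a*b) = uinv a * uinv b"
  apply (rule uinv_eq)
  using uinv_r[of a] uinv_r[of b] by (metis mult.assoc mult.left_commute mult_1_right)

lemma uinv_uinv: "(a::'a::comm_ring_1) dvd 1 \<Longrightarrow> uinv (uinv a) = a"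
  by (rule uinv_eq) (simp add: uinv_l)

lemma uinv_neg: "(a::'a::comm_ring_1) dvd 1 \<Longrightarrow> uinv (-a) = - uinv a"
  by (rule uinv_eq) (simp add: uinv_r)

lemma uinv_one[simp]: "uinv (1::'a::comm_ring_1) = 1"
  by (rule uinv_eq) simp

lemma unit_cancel: "(u::'a::comm_ring_1) dvd 1 \<Longrightarrow> x * u = y * u \<Longrightarrow> x = y"
  by (metis mult.assoc uinv_r mult_1_right)

lemma sqclass_sq: "(s::'a::comm_ring_1) dvd 1 \<Longrightarrow> sqclass (a*s*s) = sqclass a"
proof -
  assume s: "s dvd 1"
  show ?thesis unfolding sqclass_def
  proof (intro set_eqI iffI)
    fix z assume "z \<in> {a * s * s * b * b |b. b dvd 1}"
    then obtain b where "b dvd 1" "z = a*s*s*b*b" by auto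
    then show "z \<in> {a * b * b |b. b dvd 1}"
      using s by (intro CollectI exI[of _ "s*b"]) (auto simp: mult_ac)
  next
    fix z assume "z \<in> {a * b * b |b. b dvd 1}"
    then obtain b where b: "b dvd 1" "z = a*b*b" by auto
    have "z = a*s*s*(b*uinv s)*(b*uinv s)"
    proof -
      have "a*s*s*(b*uinv s)*(b*uinv s) = a*b*b*(s*uinv s)*(s*uinv s)" by (simp add: mult_ac)
      then show ?thesis using b uinv_r[OF s] by simp
    qed
    then show "z \<in> {a * s * s * b * b |b. b dvd 1}"
      using s b uinv_unit[OF s] by (intro CollectI exI[of _ "b*uinv s"]) (auto simp:)
  qed
qed

lemma alg5:
  fixes d01 d02 d03 d04 d12 d13 d14 d23 d24 :: "'a::comm_ring_1"
  assumes u: "d01 dvd 1" "d02 dvd 1" "d03 dvd 1" "d04 dvd 1" "d12 dvd 1" "d13 dvd 1"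
    "d14 dvd 1" "d23 dvd 1" "d24 dvd 1"
  and p1: "d02*d13 - d03*d12 = d01*d23" and p2: "d02*d14 - d04*d12 = d01*d24"
  defines "g \<equiv> d02*d01*uinv d12" and "x \<equiv> d03*d12*uinv(d13*d02)" and "y \<equiv> d04*d12*uinv(d14*d02)"
  shows "d03*d01*uinv d13 = g*x"
    "d04*d13*uinv(d14*d03) = y * uinv x"
    "sqclass (d03*d02*uinv d23) = sqclass (g*(uinv x - 1))"
    "d04*d23*uinv(d24*d03) = (1 - uinv x) * uinv (1 - uinv y)"
    "sqclass (d13*d12*uinv d23) = sqclass (g*(1 - x))"
    "d14*d23*uinv(d24*d13) = (1 - x) * uinv (1 - y)"
proof -
  define i01 where "i01 = uinv d01"
  define i02 where "i02 = uinv d02"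
  define i03 where "i03 = uinv d03"
  define i04 where "i04 = uinv d04"
  define i12 where "i12 = uinv d12"
  define i13 where "i13 = uinv d13"
  define i14 where "i14 = uinv d14"
  define i23 where "i23 = uinv d23"
  define i24 where "i24 = uinv d24"
  note ii = i01_def i02_def i03_def i04_def i12_def i13_def i14_def i23_def i24_def
  have e: "d01*i01 = 1" "d02*i02 = 1" "d03*i03 = 1" "d04*i04 = 1" "d12*i12 = 1" "d13*i13 = 1"
    "d14*i14 = 1" "d23*i23 = 1" "d24*i24 = 1" using u by (simp_all add: ii uinv_r)
  have x: "x = d03*d12*i13*i02" unfolding x_def using u by (simp add: uinv_mult ii mult.assoc)
  have y: "y = d04*d12*i14*i02" unfolding y_def using u by (simp add: uinv_mult ii mult.assoc)
  have g: "g = d02*d01*i12" unfolding g_def by (simp add: ii)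
  have ix: "uinv x = d13*d02*i03*i12"
  proof (unfold x, rule uinv_eq)
    have "d03*d12*i13*i02 * (d13*d02*i03*i12) = (d03*i03)*(d12*i12)*(d13*i13)*(d02*i02)" by (simp add: mult_ac)
    then show "d03*d12*i13*i02 * (d13*d02*i03*i12) = 1" using e by simp
  qed
  have iy: "uinv y = d14*d02*i04*i12"
  proof (unfold y, rule uinv_eq)
    have "d04*d12*i14*i02 * (d14*d02*i04*i12) = (d04*i04)*(d12*i12)*(d14*i14)*(d02*i02)" by (simp add: mult_ac)
    then show "d04*d12*i14*i02 * (d14*d02*i04*i12) = 1" using e by simp
  qed
  show "d03*d01*uinv d13 = g*x"
  proof -
    have "g*x = d03*d01*i13*(d02*i02)*(d12*i12)" unfolding g x by (simp add: mult_ac)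
    then show ?thesis using e by (simp add: ii)
  qed
  show "d04*d13*uinv(d14*d03) = y * uinv x"
  proof -
    have "y * uinv x = d04*d13*(i14*i03)*(d02*i02)*(d12*i12)" unfolding y ix by (simp add: mult_ac)
    then show ?thesis using e u by (simp add: ii uinv_mult)
  qed
  have ix1: "uinv x - 1 = d01*d23*i03*i12"
  proof -
    have "uinv x - 1 = d13*d02*i03*i12 - d03*d12*i03*i12"
    proof -
      have "d03*d12*i03*i12 = (d03*i03)*(d12*i12)" by (simp add: mult_ac)
      then show ?thesis using e ix by simp
    qed
    also have "\<dots> = (d02*d13 - d03*d12)*i03*i12" by (simp add: algebra_simps)
    finally show ?thesis using p1 by simp
  qed
  show "sqclass (d03*d02*uinv d23) = sqclass (g*(uinv x - 1))"
  proof -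
    have s: "d01*d23*i03*i12 dvd 1" using u by (simp add: ii uinv_unit)
    have "g*(uinv x - 1) = d03*d02*i23*(d01*d23*i03*i12)*(d01*d23*i03*i12)"
    proof -
      have "d03*d02*i23*(d01*d23*i03*i12)*(d01*d23*i03*i12)
         = d02*d01*i12*(d01*d23*i03*i12) * ((d03*i03)*(d23*i23))" by (simp add: mult_ac)
      then show ?thesis using e by (simp add: ix1 g)
    qed
    then show ?thesis using sqclass_sq[OF s] by (simp add: ii)
  qed
  have iy1: "uinv y - 1 = d01*d24*i04*i12"
  proof -
    have "uinv y - 1 = d14*d02*i04*i12 - d04*d12*i04*i12"
    proof -
      have "d04*d12*i04*i12 = (d04*i04)*(d12*i12)" by (simp add: mult_ac)
      then show ?thesis using e iy by simp
    qed
    also have "\<dots> = (d02*d14 - d04*d12)*i04*i12" by (simp add: algebra_simps)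
    finally show ?thesis using p2 by simp
  qed
  show "d04*d23*uinv(d24*d03) = (1 - uinv x) * uinv (1 - uinv y)"
  proof -
    have a: "1 - uinv x = - (d01*d23*i03*i12)" using ix1 by (simp add: algebra_simps)
    have b: "uinv (1 - uinv y) = - (d04*d12*i01*i24)"
    proof -
      have "1 - uinv y = - (d01*d24*i04*i12)" using iy1 by (simp add: algebra_simps)
      moreover have "uinv (- (d01*d24*i04*i12)) = - (d04*d12*i01*i24)"
      proof (rule uinv_eq)
        have "- (d01*d24*i04*i12) * - (d04*d12*i01*i24) = (d01*i01)*(d24*i24)*(d04*i04)*(d12*i12)"
          by (simp add: mult_ac)
        then show "- (d01*d24*i04*i12) * - (d04*d12*i01*i24) = 1" using e by simp
      qed
      ultimately show ?thesis by simp
    qed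
    have "(1 - uinv x) * uinv (1 - uinv y) = d04*d23*(i24*i03)*(d01*i01)*(d12*i12)"
      unfolding a b by (simp add: mult_ac)
    then show ?thesis using e u by (simp add: ii uinv_mult)
  qed
  have x1: "1 - x = d01*d23*i13*i02"
  proof -
    have "1 - x = d13*d02*i13*i02 - d03*d12*i13*i02"
    proof -
      have "d13*d02*i13*i02 = (d13*i13)*(d02*i02)" by (simp add: mult_ac)
      then show ?thesis using e x by simp
    qed
    also have "\<dots> = (d02*d13 - d03*d12)*i13*i02" by (simp add: algebra_simps)
    finally show ?thesis using p1 by simp
  qed
  have y1: "1 - y = d01*d24*i14*i02"
  proof -
    have "1 - y = d14*d02*i14*i02 - d04*d12*i14*i02"
    proof -
      have "d14*d02*i14*i02 = (d14*i14)*(d02*i02)" by (simp add: mult_ac)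
      then show ?thesis using e y by simp
    qed
    also have "\<dots> = (d02*d14 - d04*d12)*i14*i02" by (simp add: algebra_simps)
    finally show ?thesis using p2 by simp
  qed
  show "sqclass (d13*d12*uinv d23) = sqclass (g*(1 - x))"
  proof -
    have s: "d01*d23*i12*i13 dvd 1" using u by (simp add: ii uinv_unit)
    have "g*(1 - x) = d13*d12*i23*(d01*d23*i12*i13)*(d01*d23*i12*i13)"
    proof -
      have "d13*d12*i23*(d01*d23*i12*i13)*(d01*d23*i12*i13)*(d02*i02)
         = d02*d01*i12*(d01*d23*i13*i02) * ((d13*i13)*(d12*i12)*(d23*i23))" by (simp add: mult_ac)
      then show ?thesis using e by (simp add: x1 g)
    qed
    then show ?thesis using sqclass_sq[OF s] by (simp add: ii)
  qed
  show "d14*d23*uinv(d24*d13) = (1 - x) * uinv (1 - y)"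
  proof -
    have b: "uinv (1 - y) = d14*d02*i01*i24"
    proof (unfold y1, rule uinv_eq)
      have "d01*d24*i14*i02 * (d14*d02*i01*i24) = (d01*i01)*(d24*i24)*(d14*i14)*(d02*i02)"
        by (simp add: mult_ac)
      then show "d01*d24*i14*i02 * (d14*d02*i01*i24) = 1" using e by simp
    qed
    have "(1 - x) * uinv (1 - y) = d14*d23*(i24*i13)*(d01*i01)*(d02*i02)"
      unfolding x1 b by (simp add: mult_ac)
    then show ?thesis using e u by (simp add: ii uinv_mult)
  qed
qed

definition sm :: "'a::comm_ring_1 \<Rightarrow> 'a row \<Rightarrow> 'a row" where
  "sm t u = (t * fst u, t * snd u)"

definition cr4 :: "'a::comm_ring_1 row \<Rightarrow> 'a row \<Rightarrow> 'a row \<Rightarrow> 'a row \<Rightarrow> 'a" where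
  "cr4 u0 u1 u2 u3 = d2 u0 u3 * d2 u1 u2 * uinv (d2 u1 u3 * d2 u0 u2)"

definition cl3 :: "'a::comm_ring_1 row \<Rightarrow> 'a row \<Rightarrow> 'a row \<Rightarrow> 'a" where
  "cl3 u0 u1 u2 = d2 u0 u2 * d2 u0 u1 * uinv (d2 u1 u2)"

definition good :: "'a::comm_ring_1 row list \<Rightarrow> bool" where
  "good us \<longleftrightarrow> (\<forall>i<length us. \<forall>j<length us. i \<noteq> j \<longrightarrow> d2 (us!i) (us!j) dvd 1)"

lemma d2_sm: "d2 (sm s u) (sm t v) = s*t*d2 u v"
  unfolding d2_def sm_def by (simp add: algebra_simps)

lemma d2_swap: "d2 v u = - d2 u (v::'a::comm_ring_1 row)"
  unfolding d2_def by (simp add: algebra_simps)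

lemma d2_unit_swap: "d2 v u dvd 1 \<longleftrightarrow> d2 u (v::'a::comm_ring_1 row) dvd 1"
  by (subst d2_swap) simp

lemma mem_rclass: "v \<in> rclass u \<longleftrightarrow> (\<exists>t. t dvd 1 \<and> v = sm t u)"
  unfolding rclass_def sm_def by auto

lemma rclass_sm: "(t::'a::comm_ring_1) dvd 1 \<Longrightarrow> rclass (sm t u) = rclass u"
proof (intro set_eqI iffI)
  assume t: "t dvd 1"
  fix v assume "v \<in> rclass (sm t u)"
  then obtain r where "r dvd 1" "v = sm r (sm t u)" by (auto simp: mem_rclass)
  then show "v \<in> rclass u" using t unfolding mem_rclass
    by (intro exI[of _ "r*t"]) (simp add: sm_def mult.assoc)
next
  assume t: "t dvd 1"
  fix v assume "v \<in> rclass u"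
  then obtain r where r: "r dvd 1" "v = sm r u" by (auto simp: mem_rclass)
  have "v = sm (r * uinv t) (sm t u)"
  proof -
    have "sm (r * uinv t) (sm t u) = sm (r * (t * uinv t)) u" by (simp add: sm_def mult_ac)
    then show ?thesis using r uinv_r[OF t] by simp
  qed
  then show "v \<in> rclass (sm t u)" using t r uinv_unit[OF t] unfolding mem_rclass
    by (intro exI[of _ "r*uinv t"]) simp
qed

lemma rep_rclass: "\<exists>t. (t::'a::comm_ring_1) dvd 1 \<and> rep (rclass u) = sm t u"
proof -
  have "u \<in> rclass u" unfolding mem_rclass by (intro exI[of _ 1]) (simp add: sm_def)
  then have "rep (rclass u) \<in> rclass u" unfolding rep_def by (rule someI)
  then show ?thesis by (simp add: mem_rclass)
qed

lemma cr_scale: "(T::'a::comm_ring_1) dvd 1 \<Longrightarrow> E dvd 1 \<Longrightarrow> (T*N)*uinv(T*E) = N*uinv E"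
proof -
  assume T: "T dvd 1" and E: "E dvd 1"
  have "(T*N)*uinv(T*E) = (T*uinv T)*(N*uinv E)" using T E by (simp add: uinv_mult mult_ac)
  then show ?thesis using uinv_r[OF T] by simp
qed

lemma cl_scale: "(T::'a::comm_ring_1) dvd 1 \<Longrightarrow> E dvd 1 \<Longrightarrow> (c*T*N)*uinv(T*E) = c*(N*uinv E)"
  using cr_scale[of T E N] by (simp add: mult.assoc)

lemma cr4_sm:
  assumes "t0 dvd 1" "t1 dvd 1" "t2 dvd 1" "t3 dvd 1" "d2 u1 u3 dvd 1" "d2 u0 u2 dvd 1"
  shows "cr4 (sm t0 u0) (sm t1 u1) (sm t2 u2) (sm t3 u3) = cr4 u0 u1 u2 (u3::'a::comm_ring_1 row)"
proof -
  have a: "t0*t3*d2 u0 u3*(t1*t2*d2 u1 u2) = (t0*t1*t2*t3)*(d2 u0 u3*d2 u1 u2)" by (simp add: mult_ac)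
  have b: "t1*t3*d2 u1 u3*(t0*t2*d2 u0 u2) = (t0*t1*t2*t3)*(d2 u1 u3*d2 u0 u2)" by (simp add: mult_ac)
  show ?thesis unfolding cr4_def d2_sm a b using assms by (intro cr_scale) simp_all
qed

lemma cl3_sm:
  assumes "t1 dvd 1" "t2 dvd 1" "d2 u1 u2 dvd 1"
  shows "cl3 (sm t0 u0) (sm t1 u1) (sm t2 u2) = t0*t0*cl3 u0 u1 (u2::'a::comm_ring_1 row)"
proof -
  have a: "t0*t2*d2 u0 u2*(t0*t1*d2 u0 u1) = (t0*t0)*(t1*t2)*(d2 u0 u2*d2 u0 u1)" by (simp add: mult_ac)
  show ?thesis unfolding cl3_def d2_sm a using assms by (intro cl_scale) simp_all
qed

lemma d2_rowmul: "d2 (rowmul u M) (rowmul v M) = mdet M * d2 u (v::'a::comm_ring_1 row)"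
  unfolding d2_def rowmul_def mdet_def by (simp add: algebra_simps)

lemma cr4_rowmul:
  assumes "mdet M dvd 1" "d2 u1 u3 dvd 1" "d2 u0 u2 dvd 1"
  shows "cr4 (rowmul u0 M) (rowmul u1 M) (rowmul u2 M) (rowmul u3 M) = cr4 u0 u1 u2 (u3::'a::comm_ring_1 row)"
proof -
  have a: "\<And>a b. mdet M*a*(mdet M*b) = (mdet M*mdet M)*(a*b)" by (simp add: mult_ac)
  show ?thesis unfolding cr4_def d2_rowmul a using assms by (intro cr_scale) simp_all
qed

lemma cl3_rowmul:
  assumes "mdet M dvd 1" "d2 u1 u2 dvd 1"
  shows "cl3 (rowmul u0 M) (rowmul u1 M) (rowmul u2 M) = mdet M * cl3 u0 u1 (u2::'a::comm_ring_1 row)"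
proof -
  have a: "\<And>a b. mdet M*a*(mdet M*b) = mdet M*mdet M*(a*b)" by (simp add: mult_ac)
  show ?thesis unfolding cl3_def d2_rowmul a using assms by (intro cl_scale) simp_all
qed

lemma rowmul_sm: "rowmul (sm t u) M = sm t (rowmul u M)"
  unfolding rowmul_def sm_def by (simp add: algebra_simps)

lemma rclass_alt: "rclass u = (\<lambda>t. sm t u) ` {t. t dvd 1}"
  unfolding rclass_def sm_def by auto

lemma img_rclass: "(\<lambda>u. rowmul u M) ` rclass u = rclass (rowmul u M)"
  unfolding rclass_alt image_image rowmul_sm by simp

lemma all_less_4: "(\<forall>i<(4::nat). P i) \<longleftrightarrow> P 0 \<and> P 1 \<and> P 2 \<and> P 3"
  by (auto simp: numeral_eq_Suc less_Suc_eq)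

lemma all_less_5: "(\<forall>i<(5::nat). P i) \<longleftrightarrow> P 0 \<and> P 1 \<and> P 2 \<and> P 3 \<and> P 4"
  by (auto simp: numeral_eq_Suc less_Suc_eq)

lemma length4: "length us = 4 \<Longrightarrow> \<exists>a b c d. us = [a,b,c,d]"
  by (auto simp: numeral_eq_Suc length_Suc_conv)

lemma length5: "length us = 5 \<Longrightarrow> \<exists>a b c d e. us = [a,b,c,d,e]"
  by (auto simp: numeral_eq_Suc length_Suc_conv)

lemma allS: "(\<forall>i<Suc n. P i) \<longleftrightarrow> P 0 \<and> (\<forall>i<n. P (Suc i))"
  by (auto simp: less_Suc_eq_0_disj)

lemma good4: "good [a,b,c,d] \<longleftrightarrow> d2 a b dvd 1 \<and> d2 a c dvd 1 \<and> d2 a d dvd 1 \<and> d2 b c dvd 1 \<and> d2 b d dvd 1 \<and> d2 c (d::'a::comm_ring_1 row) dvd 1"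
  unfolding good_def by (simp add: allS d2_unit_swap) blast

lemma good5: "good [a,b,c,d,e] \<longleftrightarrow> d2 a b dvd 1 \<and> d2 a c dvd 1 \<and> d2 a d dvd 1 \<and> d2 a e dvd 1 \<and> d2 b c dvd 1 \<and> d2 b d dvd 1 \<and> d2 b e dvd 1 \<and> d2 c d dvd 1 \<and> d2 c e dvd 1 \<and> d2 d (e::'a::comm_ring_1 row) dvd 1"
  unfolding good_def by (simp add: allS d2_unit_swap) blast

lemma unimod: "d2 u v dvd 1 \<Longrightarrow> unimodular (u::'a::comm_ring_1 row)"
proof -
  assume D: "d2 u v dvd 1"
  have "fst u * (snd v * uinv (d2 u v)) + snd u * (- fst v * uinv (d2 u v)) = d2 u v * uinv (d2 u v)"
    unfolding d2_def by (simp add: algebra_simps)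
  then show ?thesis unfolding unimodular_def using uinv_r[OF D]
    by (intro exI[of _ "snd v * uinv (d2 u v)"] exI[of _ "- fst v * uinv (d2 u v)"]) simp
qed

lemma Xn_iff: "2 \<le> n \<Longrightarrow> cs \<in> Xn n \<longleftrightarrow> (\<exists>us. cs = map rclass us \<and> length us = n \<and> good (us::'a::comm_ring_1 row list))"
proof
  assume "cs \<in> Xn n" then show "\<exists>us. cs = map rclass us \<and> length us = n \<and> good us"
    unfolding Xn_def good_def by auto
next
  assume n: "2 \<le> n" and "\<exists>us. cs = map rclass us \<and> length us = n \<and> good us"
  then obtain us where us: "cs = map rclass us" "length us = n" "good us" by blast
  have "unimodular (us ! i)" if i: "i < n" for i
  proof -
    define j where "j = (if i = 0 then 1 else (0::nat))"
    have "j < n" "i \<noteq> j" using n i by (auto simp: j_def)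
    then have "d2 (us!i) (us!j) dvd 1" using us i unfolding good_def by auto
    then show ?thesis by (rule unimod)
  qed
  then show "cs \<in> Xn n" using us unfolding Xn_def good_def by auto
qed

lemma Xn4_iff: "cs \<in> Xn 4 \<longleftrightarrow> (\<exists>a b c d. cs = map rclass [a,b,c,d] \<and> good [a,b,c,(d::'a::comm_ring_1 row)])"
proof -
  have "cs \<in> Xn 4 \<longleftrightarrow> (\<exists>us. cs = map rclass us \<and> length us = 4 \<and> good (us::'a row list))"
    by (rule Xn_iff) simp
  also have "\<dots> \<longleftrightarrow> (\<exists>a b c d. cs = map rclass [a,b,c,d] \<and> good [a,b,c,(d::'a::comm_ring_1 row)])"
  proof
    assume "\<exists>us. cs = map rclass us \<and> length us = 4 \<and> good (us::'a row list)"
    then obtain us where us: "cs = map rclass us" "length us = 4" "good (us::'a row list)" by blast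
    from length4[OF us(2)] obtain a b c d where "us = [a,b,c,d]" by blast
    then show "\<exists>a b c d. cs = map rclass [a,b,c,d] \<and> good [a,b,c,(d::'a::comm_ring_1 row)]" using us by blast
  next
    assume "\<exists>a b c d. cs = map rclass [a,b,c,d] \<and> good [a,b,c,(d::'a::comm_ring_1 row)]"
    then obtain a b c d where "cs = map rclass [a,b,c,d]" "good [a,b,c,(d::'a::comm_ring_1 row)]" by blast
    then show "\<exists>us. cs = map rclass us \<and> length us = 4 \<and> good (us::'a row list)"
      by (intro exI[of _ "[a,b,c,d]"]) simp
  qed
  finally show ?thesis .
qed

lemma Xn5_iff: "cs \<in> Xn 5 \<longleftrightarrow> (\<exists>a b c d e. cs = map rclass [a,b,c,d,e] \<and> good [a,b,c,d,(e::'a::comm_ring_1 row)])"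
proof -
  have "cs \<in> Xn 5 \<longleftrightarrow> (\<exists>us. cs = map rclass us \<and> length us = 5 \<and> good (us::'a row list))"
    by (rule Xn_iff) simp
  also have "\<dots> \<longleftrightarrow> (\<exists>a b c d e. cs = map rclass [a,b,c,d,e] \<and> good [a,b,c,d,(e::'a::comm_ring_1 row)])"
  proof
    assume "\<exists>us. cs = map rclass us \<and> length us = 5 \<and> good (us::'a row list)"
    then obtain us where us: "cs = map rclass us" "length us = 5" "good (us::'a row list)" by blast
    from length5[OF us(2)] obtain a b c d e where "us = [a,b,c,d,e]" by blast
    then show "\<exists>a b c d e. cs = map rclass [a,b,c,d,e] \<and> good [a,b,c,d,(e::'a::comm_ring_1 row)]" using us by blast
  next
    assume "\<exists>a b c d e. cs = map rclass [a,b,c,d,e] \<and> good [a,b,c,d,(e::'a::comm_ring_1 row)]"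
    then obtain a b c d e where "cs = map rclass [a,b,c,d,e]" "good [a,b,c,d,(e::'a::comm_ring_1 row)]" by blast
    then show "\<exists>us. cs = map rclass us \<and> length us = 5 \<and> good (us::'a row list)"
      by (intro exI[of _ "[a,b,c,d,e]"]) simp
  qed
  finally show ?thesis .
qed



lemma plucker: "d2 a c * d2 b d - d2 a d * d2 b c = d2 a b * d2 c (d::'a::comm_ring_1 row)"
  unfolding d2_def by (simp add: algebra_simps)

lemma cr_arg_eq: "cr_arg cs = cr4 (rep (cs!0)) (rep (cs!1)) (rep (cs!2)) (rep (cs!3))"
  by (simp add: cr_arg_def cr4_def Let_def)

lemma cls_arg_eq: "cls_arg cs = cl3 (rep (cs!0)) (rep (cs!1)) (rep (cs!2))"
  by (simp add: cls_arg_def cl3_def Let_def)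

lemma face_vals:
  assumes "good [u0,u1,u2,(u3::'a::comm_ring_1 row)]"
  shows "cr_arg (map rclass [u0,u1,u2,u3]) = cr4 u0 u1 u2 u3"
    "sqclass (cls_arg (map rclass [u0,u1,u2,u3])) = sqclass (cl3 u0 u1 u2)"
proof -
  obtain t0 where t0: "t0 dvd 1" "rep (rclass u0) = sm t0 u0" using rep_rclass by blast
  obtain t1 where t1: "t1 dvd 1" "rep (rclass u1) = sm t1 u1" using rep_rclass by blast
  obtain t2 where t2: "t2 dvd 1" "rep (rclass u2) = sm t2 u2" using rep_rclass by blast
  obtain t3 where t3: "t3 dvd 1" "rep (rclass u3) = sm t3 u3" using rep_rclass by blast
  note g = assms[unfolded good4]
  show "cr_arg (map rclass [u0,u1,u2,u3]) = cr4 u0 u1 u2 u3"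
    unfolding cr_arg_eq using t0 t1 t2 t3 g by (simp add: cr4_sm)
  have "cls_arg (map rclass [u0,u1,u2,u3]) = cl3 u0 u1 u2 * t0 * t0"
    unfolding cls_arg_eq using t0 t1 t2 t3 g by (simp add: cl3_sm mult_ac)
  then show "sqclass (cls_arg (map rclass [u0,u1,u2,u3])) = sqclass (cl3 u0 u1 u2)"
    using sqclass_sq[OF t0(1)] by simp
qed

lemma Xn4_good: "good [u0,u1,u2,(u3::'a::comm_ring_1 row)] \<Longrightarrow> map rclass [u0,u1,u2,u3] \<in> Xn 4"
  unfolding Xn4_iff by blast

lemma Xn5_good: "good [u0,u1,u2,u3,(u4::'a::comm_ring_1 row)] \<Longrightarrow> map rclass [u0,u1,u2,u3,u4] \<in> Xn 5"
  unfolding Xn5_iff by blast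

lemma Phi_face:
  assumes "good [u0,u1,u2,(u3::'a::comm_ring_1 row)]"
  shows "Phi (frag_of (map rclass [u0,u1,u2,u3])) = frag_of (sqclass (cl3 u0 u1 u2), cr4 u0 u1 u2 u3)"
  using face_vals[OF assms] Xn4_good[OF assms] by (simp add: Phi_def del: list.map)

lemma Psi_face:
  assumes "good [u0,u1,u2,(u3::'a::comm_ring_1 row)]"
  shows "Psi (frag_of (map rclass [u0,u1,u2,u3])) = frag_of (cr4 u0 u1 u2 u3)"
  using face_vals[OF assms] Xn4_good[OF assms] by (simp add: Psi_def del: list.map)

lemma cr4_W:
  assumes "good [u0,u1,u2,(u3::'a::comm_ring_1 row)]"
  shows "cr4 u0 u1 u2 u3 \<in> Wset"
proof -
  note g = assms[unfolded good4]
  define E where "E = d2 u1 u3 * d2 u0 u2"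
  define N where "N = d2 u0 u3 * d2 u1 u2"
  have E: "E dvd 1" using g by (simp add: E_def)
  have c: "cr4 u0 u1 u2 u3 = N * uinv E" by (simp add: cr4_def E_def N_def)
  have "1 - N * uinv E = (E - N) * uinv E" using uinv_r[OF E] by (simp add: algebra_simps)
  also have "E - N = d2 u0 u1 * d2 u2 u3"
    using plucker[of u0 u2 u1 u3] plucker[of u0 u1 u2 u3] by (simp add: E_def N_def mult_ac)
  finally have "1 - cr4 u0 u1 u2 u3 = d2 u0 u1 * d2 u2 u3 * uinv E" using c by simp
  then show ?thesis unfolding Wset_def c using g E uinv_unit[OF E] by (simp add: N_def)
qed

lemma cl3_unit: "d2 u0 u1 dvd 1 \<Longrightarrow> d2 u0 u2 dvd 1 \<Longrightarrow> d2 u1 u2 dvd 1 \<Longrightarrow> cl3 u0 u1 (u2::'a::comm_ring_1 row) dvd 1"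
  unfolding cl3_def by (simp add: uinv_unit)

lemma bdry5: "bdry [c0,c1,c2,c3,c4] = frag_of [c1,c2,c3,c4] - frag_of [c0,c2,c3,c4] + frag_of [c0,c1,c3,c4] - frag_of [c0,c1,c2,c4] + frag_of [c0,c1,c2,c3]"
  by (simp add: bdry_def eval_nat_numeral)

lemma Phi_add: "Phi (a + b) = Phi a + Phi b" by (simp add: Phi_def frag_extend_add)
lemma Phi_diff: "Phi (a - b) = Phi a - Phi b" by (simp add: Phi_def frag_extend_diff)
lemma Psi_add: "Psi (a + b) = Psi a + Psi b" by (simp add: Psi_def frag_extend_add)
lemma Psi_diff: "Psi (a - b) = Psi a - Psi b" by (simp add: Psi_def frag_extend_diff)

lemma bdry5m: "bdry (map rclass [u0,u1,u2,u3,u4]) =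
   frag_of (map rclass [u1,u2,u3,u4]) - frag_of (map rclass [u0,u2,u3,u4]) + frag_of (map rclass [u0,u1,u3,u4])
   - frag_of (map rclass [u0,u1,u2,u4]) + frag_of (map rclass [u0,u1,u2,u3])"
  by (simp add: bdry5)

lemma five_facts:
  assumes "good [u0,u1,u2,u3,(u4::'a::comm_ring_1 row)]"
  shows "cl3 u0 u1 u3 = cl3 u0 u1 u2 * cr4 u0 u1 u2 u3"
    "cr4 u0 u1 u3 u4 = cr4 u0 u1 u2 u4 * uinv (cr4 u0 u1 u2 u3)"
    "sqclass (cl3 u0 u2 u3) = sqclass (cl3 u0 u1 u2 * (uinv (cr4 u0 u1 u2 u3) - 1))"
    "cr4 u0 u2 u3 u4 = (1 - uinv (cr4 u0 u1 u2 u3)) * uinv (1 - uinv (cr4 u0 u1 u2 u4))"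
    "sqclass (cl3 u1 u2 u3) = sqclass (cl3 u0 u1 u2 * (1 - cr4 u0 u1 u2 u3))"
    "cr4 u1 u2 u3 u4 = (1 - cr4 u0 u1 u2 u3) * uinv (1 - cr4 u0 u1 u2 u4)"
proof -
  note g = assms[unfolded good5]
  note A = alg5[of "d2 u0 u1" "d2 u0 u2" "d2 u0 u3" "d2 u0 u4" "d2 u1 u2" "d2 u1 u3" "d2 u1 u4" "d2 u2 u3" "d2 u2 u4"]
  note P = plucker[of u0 u2 u1 u3] plucker[of u0 u2 u1 u4]
  have u: "d2 u0 u1 dvd 1" "d2 u0 u2 dvd 1" "d2 u0 u3 dvd 1" "d2 u0 u4 dvd 1" "d2 u1 u2 dvd 1"
    "d2 u1 u3 dvd 1" "d2 u1 u4 dvd 1" "d2 u2 u3 dvd 1" "d2 u2 u4 dvd 1" using g by simp_all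
  show "cl3 u0 u1 u3 = cl3 u0 u1 u2 * cr4 u0 u1 u2 u3"
    unfolding cl3_def cr4_def by (rule A(1)[OF u P])
  show "cr4 u0 u1 u3 u4 = cr4 u0 u1 u2 u4 * uinv (cr4 u0 u1 u2 u3)"
    unfolding cl3_def cr4_def by (rule A(2)[OF u P])
  show "sqclass (cl3 u0 u2 u3) = sqclass (cl3 u0 u1 u2 * (uinv (cr4 u0 u1 u2 u3) - 1))"
    unfolding cl3_def cr4_def by (rule A(3)[OF u P])
  show "cr4 u0 u2 u3 u4 = (1 - uinv (cr4 u0 u1 u2 u3)) * uinv (1 - uinv (cr4 u0 u1 u2 u4))"
    unfolding cl3_def cr4_def by (rule A(4)[OF u P])
  show "sqclass (cl3 u1 u2 u3) = sqclass (cl3 u0 u1 u2 * (1 - cr4 u0 u1 u2 u3))"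
    unfolding cl3_def cr4_def by (rule A(5)[OF u P])
  show "cr4 u1 u2 u3 u4 = (1 - cr4 u0 u1 u2 u3) * uinv (1 - cr4 u0 u1 u2 u4)"
    unfolding cl3_def cr4_def by (rule A(6)[OF u P])
qed

lemma Phi_bdry:
  assumes "good [u0,u1,u2,u3,(u4::'a::comm_ring_1 row)]"
  shows "Phi (bdry (map rclass [u0,u1,u2,u3,u4])) = rel_RP (cl3 u0 u1 u2) (cr4 u0 u1 u2 u3) (cr4 u0 u1 u2 u4)"
proof -
  note g = assms[unfolded good5]
  have gs: "good [u1,u2,u3,u4]" "good [u0,u2,u3,u4]" "good [u0,u1,u3,u4]" "good [u0,u1,u2,u4]" "good [u0,u1,u2,u3]"
    using g by (simp_all add: good4)
  note F = five_facts[OF assms]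
  show ?thesis
    unfolding bdry5m Phi_add Phi_diff Phi_face[OF gs(1)] Phi_face[OF gs(2)] Phi_face[OF gs(3)]
      Phi_face[OF gs(4)] Phi_face[OF gs(5)] rel_RP_def F(1,2,4,6) F(3,5)[symmetric]
    by (simp add: algebra_simps)
qed

lemma Psi_bdry:
  assumes "good [u0,u1,u2,u3,(u4::'a::comm_ring_1 row)]"
  shows "Psi (bdry (map rclass [u0,u1,u2,u3,u4])) = rel_P (cr4 u0 u1 u2 u3) (cr4 u0 u1 u2 u4)"
proof -
  note g = assms[unfolded good5]
  have gs: "good [u1,u2,u3,u4]" "good [u0,u2,u3,u4]" "good [u0,u1,u3,u4]" "good [u0,u1,u2,u4]" "good [u0,u1,u2,u3]"
    using g by (simp_all add: good4)
  note F = five_facts[OF assms]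
  show ?thesis
    unfolding bdry5m Psi_add Psi_diff Psi_face[OF gs(1)] Psi_face[OF gs(2)] Psi_face[OF gs(3)]
      Psi_face[OF gs(4)] Psi_face[OF gs(5)] rel_P_def F(1,2,4,6)
    by (simp add: algebra_simps)
qed

lemma rel_in:
  assumes "good [u0,u1,u2,u3,(u4::'a::comm_ring_1 row)]"
  shows "cl3 u0 u1 u2 dvd 1" "cr4 u0 u1 u2 u3 \<in> Wset" "cr4 u0 u1 u2 u4 \<in> Wset"
    "cr4 u0 u1 u2 u4 * uinv (cr4 u0 u1 u2 u3) \<in> Wset"
proof -
  note g = assms[unfolded good5]
  show "cl3 u0 u1 u2 dvd 1" using g by (simp add: cl3_unit)
  show "cr4 u0 u1 u2 u3 \<in> Wset" using g by (simp add: cr4_W good4)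
  show "cr4 u0 u1 u2 u4 \<in> Wset" using g by (simp add: cr4_W good4)
  have "cr4 u0 u1 u3 u4 \<in> Wset" using g by (simp add: cr4_W good4)
  then show "cr4 u0 u1 u2 u4 * uinv (cr4 u0 u1 u2 u3) \<in> Wset" using five_facts(2)[OF assms] by simp
qed



lemma conf_act_of: "conf_act M (frag_of (map rclass us)) = frag_of (map rclass (map (\<lambda>u. rowmul u M) us))"
  unfolding conf_act_def by (simp add: img_rclass comp_def)

lemma gact_sqclass: "gact a (sqclass c) = sqclass (a * c)"
  unfolding gact_def sqclass_def by (auto simp: mult.assoc)

lemma RP_act_of: "RP_act a (frag_of (g, x)) = frag_of (gact a g, x)"
  unfolding RP_act_def by simp

lemma good4_rowmul:
  assumes "mdet M dvd 1" "good [u0,u1,u2,(u3::'a::comm_ring_1 row)]"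
  shows "good [rowmul u0 M, rowmul u1 M, rowmul u2 M, rowmul u3 M]"
  using assms unfolding good4 d2_rowmul by simp

lemma equiv_face:
  assumes M: "mdet M dvd 1" and cs: "cs \<in> Xn (4::nat)"
  shows "Phi (conf_act M (frag_of cs)) = RP_act (mdet M) (Phi (frag_of (cs::'a::comm_ring_1 row set list)))"
    "Psi (conf_act M (frag_of cs)) = Psi (frag_of cs)"
proof -
  obtain u0 u1 u2 u3 where c: "cs = map rclass [u0,u1,u2,u3]" and g: "good [u0,u1,u2,(u3::'a row)]"
    using cs unfolding Xn4_iff by blast
  have gm: "good [rowmul u0 M, rowmul u1 M, rowmul u2 M, rowmul u3 M]" by (rule good4_rowmul[OF M g])
  have im: "conf_act M (frag_of cs) = frag_of (map rclass [rowmul u0 M, rowmul u1 M, rowmul u2 M, rowmul u3 M])"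
    unfolding c conf_act_of by simp
  note gg = g[unfolded good4]
  show "Phi (conf_act M (frag_of cs)) = RP_act (mdet M) (Phi (frag_of cs))"
    unfolding im unfolding c Phi_face[OF gm] Phi_face[OF g] RP_act_of gact_sqclass
    using gg M by (simp add: cr4_rowmul cl3_rowmul)
  show "Psi (conf_act M (frag_of cs)) = Psi (frag_of cs)"
    unfolding im unfolding c Psi_face[OF gm] Psi_face[OF g]
    using gg M by (simp add: cr4_rowmul)
qed

definition std :: "'a::comm_ring_1 \<Rightarrow> 'a \<Rightarrow> 'a row list" where
  "std a x = [(1,0),(0,1),(1,-a),(1,-(a*x))]"

lemma d2_simps: "d2 (1,0) (0,1) = 1" "d2 (1,0) (1,b) = b" "d2 (0,1) (1,b) = -1"
  "d2 (1,b) (1,c) = c - b"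
  by (simp_all add: d2_def)

lemma std_good: "a dvd 1 \<Longrightarrow> x \<in> Wset \<Longrightarrow> good (std a (x::'a::comm_ring_1))"
proof -
  assume a: "a dvd 1" and x: "x \<in> Wset"
  have "- (a*x) - - a = a * (1 - x)" by (simp add: algebra_simps)
  then show ?thesis using a x unfolding std_def good4 d2_simps Wset_def by simp
qed

lemma std_vals: "a dvd 1 \<Longrightarrow> x dvd 1 \<Longrightarrow> cl3 (1,0) (0,1) (1,-a) = a \<and> cr4 (1,0) (0,1) (1,-a) (1,-(a*x)) = (x::'a::comm_ring_1)"
proof -
  assume a: "a dvd 1" and x: "x dvd 1"
  have "cr4 (1,0) (0,1) (1,-a) (1,-(a*x)) = x * (a * uinv a)"
    unfolding cr4_def d2_simps by (simp add: uinv_neg mult_ac)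
  then show ?thesis using uinv_r[OF a] unfolding cl3_def d2_simps by (simp add: uinv_neg)
qed

lemma std_Xn: "a dvd 1 \<Longrightarrow> x \<in> Wset \<Longrightarrow> map rclass (std a (x::'a::comm_ring_1)) \<in> Xn 4"
  using std_good[of a x] unfolding std_def by (intro Xn4_good) simp

lemma Phi_std: "a dvd 1 \<Longrightarrow> x \<in> Wset \<Longrightarrow> Phi (frag_of (map rclass (std a (x::'a::comm_ring_1)))) = frag_of (sqclass a, x)"
proof -
  assume a: "a dvd 1" and x: "x \<in> Wset"
  have g: "good [(1,0),(0,1),(1,-a),(1,-(a*x))]" using std_good[OF a x] by (simp add: std_def)
  have v: "cl3 (1,0) (0,1) (1,-a) = a" "cr4 (1,0) (0,1) (1,-a) (1,-(a*x)) = x"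
    using std_vals[OF a, of x] x by (auto simp: Wset_def)
  show ?thesis unfolding std_def Phi_face[OF g] v by simp
qed

lemma Psi_std: "a dvd 1 \<Longrightarrow> x \<in> Wset \<Longrightarrow> Psi (frag_of (map rclass (std a (x::'a::comm_ring_1)))) = frag_of x"
proof -
  assume a: "a dvd 1" and x: "x \<in> Wset"
  have g: "good [(1,0),(0,1),(1,-a),(1,-(a*x))]" using std_good[OF a x] by (simp add: std_def)
  have v: "cl3 (1,0) (0,1) (1,-a) = a" "cr4 (1,0) (0,1) (1,-a) (1,-(a*x)) = x"
    using std_vals[OF a, of x] x by (auto simp: Wset_def)
  show ?thesis unfolding std_def Psi_face[OF g] v by simp
qed

lemma comb_alg:
  fixes p :: "'a::comm_ring_1"
  assumes "al*ia = 1" "p*be = r*al" "al*x0 + be*x1 = dv*x2"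
  shows "p*x0 + r*x1 = p*ia*dv*x2"
proof -
  have "p*ia*dv*x2 = p*ia*(al*x0 + be*x1)" using assms(3) by (simp add: mult.assoc)
  also have "\<dots> = (al*ia)*p*x0 + ia*(p*be)*x1" by (simp add: algebra_simps)
  also have "\<dots> = p*x0 + ia*(r*al)*x1" using assms(1,2) by simp
  also have "\<dots> = p*x0 + r*x1*(al*ia)" by (simp add: mult_ac)
  finally show ?thesis using assms(1) by simp
qed

lemma comb:
  assumes D: "d2 u0 u1 dvd 1" and al: "d2 u2 u1 dvd 1" and p: "p dvd 1"
    and e: "p * d2 u0 u2 = r * d2 u2 u1"
  shows "rclass (p*fst u0 + r*fst u1, p*snd u0 + r*snd u1) = rclass (u2::'a::comm_ring_1 row)"
proof -
  define lam where "lam = p * uinv (d2 u2 u1) * d2 u0 u1"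
  have i1: "d2 u2 u1 * fst u0 + d2 u0 u2 * fst u1 = d2 u0 u1 * fst u2"
    unfolding d2_def by (simp add: algebra_simps)
  have i2: "d2 u2 u1 * snd u0 + d2 u0 u2 * snd u1 = d2 u0 u1 * snd u2"
    unfolding d2_def by (simp add: algebra_simps)
  have "(p*fst u0 + r*fst u1, p*snd u0 + r*snd u1) = sm lam u2"
    unfolding sm_def lam_def
    using comb_alg[OF uinv_r[OF al] e i1] comb_alg[OF uinv_r[OF al] e i2] by simp
  moreover have "lam dvd 1" using D al p uinv_unit[OF al] by (simp add: lam_def)
  ultimately show ?thesis by (simp add: rclass_sm)
qed

lemma rowmul_std: "rowmul (1,0) M = fst M" "rowmul (0,1) M = snd M"
  "rowmul (1,c) (sm p u0, sm q u1) = (p*fst u0 + (c*q)*fst u1, p*snd u0 + (c*q)*snd u1)"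
  by (simp_all add: rowmul_def sm_def mult_ac)

lemma orbit:
  assumes g: "good [u0,u1,u2,(u3::'a::comm_ring_1 row)]" and a: "a dvd 1" and s: "s dvd 1"
    and h: "cl3 u0 u1 u2 = a*s*s"
  shows "\<exists>M. mdet M = 1 \<and> conf_act M (frag_of (map rclass (std a (cr4 u0 u1 u2 u3)))) = frag_of (map rclass [u0,u1,u2,u3])"
proof -
  note gg = g[unfolded good4]
  define p where "p = uinv s"
  define q where "q = s * uinv (d2 u0 u1)"
  define M where "M = (sm p u0, sm q u1)"
  define x where "x = cr4 u0 u1 u2 u3"
  have e01: "d2 u0 u1 * uinv (d2 u0 u1) = 1" using gg by (simp add: uinv_r)
  have e02: "d2 u0 u2 * uinv (d2 u0 u2) = 1" using gg by (simp add: uinv_r)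
  have e12: "d2 u1 u2 * uinv (d2 u1 u2) = 1" using gg by (simp add: uinv_r)
  have e13: "d2 u1 u3 * uinv (d2 u1 u3) = 1" using gg by (simp add: uinv_r)
  have es: "s * uinv s = 1" using s by (simp add: uinv_r)
  have det: "mdet M = 1"
  proof -
    have "mdet M = (s * uinv s) * (d2 u0 u1 * uinv (d2 u0 u1))"
      unfolding M_def mdet_def p_def q_def by (simp add: d2_sm mult_ac)
    then show ?thesis using e01 es by simp
  qed
  have pu: "p dvd 1" using s by (simp add: p_def uinv_unit)
  have qu: "q dvd 1" using s gg by (simp add: q_def uinv_unit)
  have E2: "a*q*d2 u1 u2 = p*d2 u0 u2"
  proof -
    have "p*d2 u0 u2 = p*d2 u0 u2*(d2 u0 u1 * uinv (d2 u0 u1))*(d2 u1 u2 * uinv (d2 u1 u2))"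
      using e01 e12 by simp
    also have "\<dots> = uinv s * uinv (d2 u0 u1) * d2 u1 u2 * cl3 u0 u1 u2"
      unfolding cl3_def p_def by (simp add: mult_ac)
    also have "\<dots> = a*q*d2 u1 u2 * (s * uinv s)" unfolding h q_def by (simp add: mult_ac)
    finally show ?thesis using es by simp
  qed
  have e2: "p * d2 u0 u2 = (-a*q) * d2 u2 u1"
    using E2 by (subst d2_swap[of u2]) simp
  have E3: "a*x*q*d2 u1 u3 = p*d2 u0 u3"
  proof -
    have "a*x*q*d2 u1 u3 = (a*q*d2 u1 u2) * d2 u0 u3 * uinv (d2 u0 u2) * (d2 u1 u3 * uinv (d2 u1 u3))"
      unfolding x_def cr4_def using gg by (simp add: uinv_mult mult_ac)
    also have "\<dots> = p*d2 u0 u3 * (d2 u0 u2 * uinv (d2 u0 u2))" unfolding E2 using e13 by (simp add: mult_ac)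
    finally show ?thesis using e02 by simp
  qed
  have e3: "p * d2 u0 u3 = (-(a*x)*q) * d2 u3 u1"
    using E3 by (subst d2_swap[of u3]) (simp add: mult_ac)
  have c2: "rclass (rowmul (1,-a) M) = rclass u2"
    unfolding M_def rowmul_std using comb[OF _ _ pu e2] gg by (simp add: d2_unit_swap)
  have c3: "rclass (rowmul (1,-(a*x)) M) = rclass u3"
    unfolding M_def rowmul_std using comb[OF _ _ pu e3] gg by (simp add: d2_unit_swap)
  have c0: "rclass (rowmul (1,0) M) = rclass u0" unfolding rowmul_std M_def using pu rclass_sm[OF pu, of u0] by (simp add: sm_def)
  have c1: "rclass (rowmul (0,1) M) = rclass u1" unfolding rowmul_std M_def using qu rclass_sm[OF qu, of u1] by (simp add: sm_def)
  have "conf_act M (frag_of (map rclass (std a x))) = frag_of (map rclass [u0,u1,u2,u3])"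
    unfolding conf_act_of std_def using c0 c1 c2 c3 by simp
  then show ?thesis using det unfolding x_def by blast
qed

lemma diag:
  assumes a: "a dvd 1"
  shows "mdet ((1,0),(0,a)) = a"
    "conf_act ((1,0),(0,a)) (frag_of (map rclass (std 1 x))) = frag_of (map rclass (std a (x::'a::comm_ring_1)))"
proof -
  show "mdet ((1,0),(0,a)) = a" by (simp add: mdet_def d2_def)
  have "rclass (0, a) = rclass (sm a (0,1))" by (simp add: sm_def)
  then have r: "rclass (0, a) = rclass (0,1)" using a by (simp add: rclass_sm)
  show "conf_act ((1,0),(0,a)) (frag_of (map rclass (std 1 x))) = frag_of (map rclass (std a x))"
    unfolding conf_act_of std_def using r by (simp add: rowmul_def mult.commute)
qed



definition repG :: "'a::comm_ring_1 set \<Rightarrow> 'a" where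
  "repG g = (SOME a. a dvd 1 \<and> g = sqclass a)"

lemma repG: "(c::'a::comm_ring_1) dvd 1 \<Longrightarrow> repG (sqclass c) dvd 1 \<and> sqclass (repG (sqclass c)) = sqclass c"
proof -
  assume c: "c dvd 1"
  have "\<exists>a. a dvd 1 \<and> sqclass c = sqclass a" using c by blast
  then have "repG (sqclass c) dvd 1 \<and> sqclass c = sqclass (repG (sqclass c))"
    unfolding repG_def by (rule someI_ex)
  then show ?thesis by simp
qed

lemma sq_rep: "sqclass a = sqclass (c::'a::comm_ring_1) \<Longrightarrow> \<exists>s. s dvd 1 \<and> c = a*s*s"
proof -
  assume h: "sqclass a = sqclass c"
  have "c \<in> sqclass c" unfolding sqclass_def by (intro CollectI exI[of _ 1]) simp
  then have "c \<in> sqclass a" using h by simp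
  then show ?thesis unfolding sqclass_def by auto
qed

definition Theta :: "(('a::comm_ring_1) set \<times> 'a \<Rightarrow>\<^sub>0 int) \<Rightarrow> ('a row set list \<Rightarrow>\<^sub>0 int)" where
  "Theta = frag_extend (\<lambda>(g,x). frag_of (map rclass (std (repG g) x)))"

definition Theta' :: "('a::comm_ring_1 \<Rightarrow>\<^sub>0 int) \<Rightarrow> ('a row set list \<Rightarrow>\<^sub>0 int)" where
  "Theta' = frag_extend (\<lambda>x. frag_of (map rclass (std 1 x)))"

lemma gen_add: "x \<in> gen_subgroup R \<Longrightarrow> y \<in> gen_subgroup R \<Longrightarrow> x + y \<in> gen_subgroup R"
proof -
  assume x: "x \<in> gen_subgroup R" and y: "y \<in> gen_subgroup R"
  have "0 - y \<in> gen_subgroup R" by (rule gen_diff[OF gen_zero y])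
  then have "x - (0 - y) \<in> gen_subgroup R" by (rule gen_diff[OF x])
  then show ?thesis by simp
qed

lemma fa_of: "x \<in> S \<Longrightarrow> frag_of x \<in> free_ab S" unfolding free_ab_def by simp
lemma fa_add: "a \<in> free_ab S \<Longrightarrow> b \<in> free_ab S \<Longrightarrow> a + b \<in> free_ab S"
  unfolding free_ab_def using keys_add by fastforce
lemma fa_diff: "a \<in> free_ab S \<Longrightarrow> b \<in> free_ab S \<Longrightarrow> a - b \<in> free_ab S"
  unfolding free_ab_def using keys_diff by fastforce
lemma fa_zero: "0 \<in> free_ab S" unfolding free_ab_def by simp

lemma E1:
  assumes cs: "cs \<in> Xn (4::nat)"
  shows "frag_of cs - Theta (Phi (frag_of cs)) \<in> N_coinv (SL2::'a::comm_ring_1 mat2 set)"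
    "frag_of cs - Theta' (Psi (frag_of cs)) \<in> N_coinv (GL2::'a::comm_ring_1 mat2 set)"
proof -
  obtain u0 u1 u2 u3 where c: "cs = map rclass [u0,u1,u2,u3]" and g: "good [u0,u1,u2,(u3::'a row)]"
    using cs unfolding Xn4_iff by blast
  note gg = g[unfolded good4]
  define a where "a = repG (sqclass (cl3 u0 u1 u2))"
  define x where "x = cr4 u0 u1 u2 u3"
  have cu: "cl3 u0 u1 u2 dvd 1" using gg by (simp add: cl3_unit)
  have a: "a dvd 1" "sqclass a = sqclass (cl3 u0 u1 u2)" using repG[OF cu] by (simp_all add: a_def)
  obtain s where s: "s dvd 1" "cl3 u0 u1 u2 = a*s*s" using sq_rep[OF a(2)] by blast
  obtain M where M: "mdet M = 1" "conf_act M (frag_of (map rclass (std a x))) = frag_of cs"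
    using orbit[OF g a(1) s] unfolding c x_def by blast
  have xW: "x \<in> Wset" unfolding x_def by (rule cr4_W[OF g])
  have stdX: "map rclass (std a x) \<in> Xn 4" by (rule std_Xn[OF a(1) xW])
  have gen1: "frag_of cs - frag_of (map rclass (std a x)) \<in> N_coinv SL2"
    unfolding N_coinv_def M(2)[symmetric]
    by (rule gen_base, rule UnI2, rule CollectI, rule exI[of _ M], rule exI[of _ "map rclass (std a x)"])
      (simp add: SL2_def M(1) stdX)
  have "Theta (Phi (frag_of cs)) = frag_of (map rclass (std a x))"
    unfolding c Phi_face[OF g] Theta_def by (simp add: a_def x_def)
  then show "frag_of cs - Theta (Phi (frag_of cs)) \<in> N_coinv SL2" using gen1 by simp
  have gen2: "frag_of cs - frag_of (map rclass (std a x)) \<in> N_coinv GL2"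
    unfolding N_coinv_def M(2)[symmetric]
    by (rule gen_base, rule UnI2, rule CollectI, rule exI[of _ M], rule exI[of _ "map rclass (std a x)"])
      (simp add: GL2_def M(1) stdX)
  have std1: "map rclass (std 1 x) \<in> Xn 4" by (rule std_Xn[OF _ xW]) simp
  have gen3: "frag_of (map rclass (std a x)) - frag_of (map rclass (std 1 x)) \<in> N_coinv GL2"
    unfolding N_coinv_def diag(2)[OF a(1), symmetric]
    by (rule gen_base, rule UnI2, rule CollectI, rule exI[of _ "((1,0),(0,a))"], rule exI[of _ "map rclass (std 1 x)"])
      (simp add: GL2_def diag(1)[OF a(1)] a(1) std1)
  have "Theta' (Psi (frag_of cs)) = frag_of (map rclass (std 1 x))"
    unfolding c Psi_face[OF g] Theta'_def by (simp add: x_def)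
  then show "frag_of cs - Theta' (Psi (frag_of cs)) \<in> N_coinv GL2"
    using gen_add[OF gen2[unfolded N_coinv_def] gen3[unfolded N_coinv_def]] unfolding N_coinv_def by simp
qed

lemma Theta_diff: "Theta (a - b) = Theta a - Theta b" by (simp add: Theta_def frag_extend_diff)
lemma Theta'_diff: "Theta' (a - b) = Theta' a - Theta' b" by (simp add: Theta'_def frag_extend_diff)

lemma E3:
  assumes "z \<in> free_ab (Xn 4 :: 'a::comm_ring_1 row set list set)"
  shows "z - Theta (Phi z) \<in> N_coinv (SL2::'a mat2 set)" "z - Theta' (Psi z) \<in> N_coinv (GL2::'a mat2 set)"
proof -
  have k: "Poly_Mapping.keys z \<subseteq> Xn 4" using assms by (simp add: free_ab_def)
  show "z - Theta (Phi z) \<in> N_coinv (SL2::'a mat2 set)" using k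
  proof (induction z rule: frag_induction)
    case zero then show ?case by (simp add: Phi_def Theta_def N_coinv_def gen_zero)
  next
    case (one x) then show ?case by (rule E1)
  next
    case (diff a b)
    have eq: "a - b - Theta (Phi (a - b)) = (a - Theta (Phi a)) - (b - Theta (Phi b))"
      by (simp add: Phi_diff Theta_diff algebra_simps)
    have "(a - Theta (Phi a)) - (b - Theta (Phi b)) \<in> gen_subgroup (bdry ` Xn 5 \<union>
      {conf_act M (frag_of cs) - frag_of cs | M cs. M \<in> SL2 \<and> cs \<in> Xn 4})"
      using diff unfolding N_coinv_def by (rule gen_diff)
    then show ?case unfolding eq N_coinv_def .
  qed
  show "z - Theta' (Psi z) \<in> N_coinv (GL2::'a mat2 set)" using k
  proof (induction z rule: frag_induction)
    case zero then show ?case by (simp add: Psi_def Theta'_def N_coinv_def gen_zero)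
  next
    case (one x) then show ?case by (rule E1)
  next
    case (diff a b)
    have eq: "a - b - Theta' (Psi (a - b)) = (a - Theta' (Psi a)) - (b - Theta' (Psi b))"
      by (simp add: Psi_diff Theta'_diff algebra_simps)
    have "(a - Theta' (Psi a)) - (b - Theta' (Psi b)) \<in> gen_subgroup (bdry ` Xn 5 \<union>
      {conf_act M (frag_of cs) - frag_of cs | M cs. M \<in> GL2 \<and> cs \<in> Xn 4})"
      using diff unfolding N_coinv_def by (rule gen_diff)
    then show ?case unfolding eq N_coinv_def .
  qed
qed

definition std5 :: "'a::comm_ring_1 \<Rightarrow> 'a \<Rightarrow> 'a \<Rightarrow> 'a row list" where
  "std5 g x y = [(1,0),(0,1),(1,-g),(1,-(g*x)),(1,-(g*y))]"

lemma std5_good: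
  assumes g: "g dvd 1" and x: "x \<in> Wset" and y: "y \<in> Wset" and yx: "y * uinv x \<in> Wset"
  shows "good (std5 g x (y::'a::comm_ring_1))"
proof -
  have xu: "x dvd 1" using x by (simp add: Wset_def)
  have "- (g*y) - - (g*x) = g*x*(1 - y*uinv x)"
  proof -
    have "g*x*(1 - y*uinv x) = g*x - g*y*(x*uinv x)" by (simp add: algebra_simps)
    then show ?thesis using uinv_r[OF xu] by simp
  qed
  moreover have "- (g*x) - - g = g*(1-x)" "- (g*y) - - g = g*(1-y)" by (simp_all add: algebra_simps)
  ultimately show ?thesis using g x y yx unfolding std5_def good5 d2_simps Wset_def by simp
qed

lemma bdry_fa:
  assumes "good [u0,u1,u2,u3,(u4::'a::comm_ring_1 row)]"
  shows "bdry (map rclass [u0,u1,u2,u3,u4]) \<in> free_ab (Xn 4)"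
proof -
  note g = assms[unfolded good5]
  have gs: "good [u1,u2,u3,u4]" "good [u0,u2,u3,u4]" "good [u0,u1,u3,u4]" "good [u0,u1,u2,u4]" "good [u0,u1,u2,u3]"
    using g by (simp_all add: good4)
  show ?thesis unfolding bdry5m
    by (intro fa_add fa_diff fa_of Xn4_good gs)
qed

lemma Theta_rel:
  assumes g: "g dvd 1" and x: "x \<in> Wset" and y: "y \<in> Wset" and yx: "y * uinv x \<in> Wset"
  shows "Theta (rel_RP g x y) \<in> N_coinv (SL2::'a::comm_ring_1 mat2 set)"
    "Theta' (rel_P x y) \<in> N_coinv (GL2::'a::comm_ring_1 mat2 set)"
proof -
  have xu: "x dvd 1" "y dvd 1" using x y by (simp_all add: Wset_def)
  have G: "good [(1,0),(0,1),(1,-g),(1,-(g*x)),(1,-(g*y))]" using std5_good[OF g x y yx] by (simp add: std5_def)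
  have G1: "good [(1,0),(0,1),(1,-1),(1,-(1*x)),(1,-(1*y))]" using std5_good[OF _ x y yx, of 1] by (simp add: std5_def)
  define b where "b = bdry (map rclass [(1,0),(0,1),(1,-g),(1,-(g*x)),(1,-(g*y))])"
  define b1 where "b1 = bdry (map rclass [(1,0),(0,1),(1,-1),(1,-(1*x)),(1,-(1*y::'a))])"
  have vx: "cl3 (1,0) (0,1) (1,-g) = g" "cr4 (1,0) (0,1) (1,-g) (1,-(g*x)) = x"
    using std_vals[OF g xu(1)] by simp_all
  have vy: "cr4 (1,0) (0,1) (1,-g) (1,-(g*y)) = y"
    using std_vals[OF g xu(2)] by simp_all
  have vx1: "cr4 (1,0) (0,1) (1,-1) (1,-(1*x)) = x" "cr4 (1,0) (0,1) (1,-1) (1,-(1*y)) = y"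
    using std_vals[of 1 x] std_vals[of 1 y] xu by simp_all
  have hb1: "Phi b = rel_RP g x y" unfolding b_def Phi_bdry[OF G] vx vy ..
  have hb2: "b - Theta (Phi b) \<in> N_coinv SL2" unfolding b_def by (rule E3(1)[OF bdry_fa[OF G]])
  have hb3: "b \<in> N_coinv SL2" unfolding N_coinv_def b_def
    by (rule gen_base, rule UnI1) (use Xn5_good[OF G] in blast)
  have "b - (b - Theta (Phi b)) \<in> N_coinv SL2"
    using hb3 hb2 unfolding N_coinv_def by (rule gen_diff)
  then show "Theta (rel_RP g x y) \<in> N_coinv (SL2::'a::comm_ring_1 mat2 set)"
    unfolding hb1 by simp
  have hc1: "Psi b1 = rel_P x y" unfolding b1_def Psi_bdry[OF G1] vx1 ..
  have hc2: "b1 - Theta' (Psi b1) \<in> N_coinv GL2" unfolding b1_def by (rule E3(2)[OF bdry_fa[OF G1]])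
  have hc3: "b1 \<in> N_coinv GL2" unfolding N_coinv_def b1_def
    by (rule gen_base, rule UnI1) (use Xn5_good[OF G1] in blast)
  have "b1 - (b1 - Theta' (Psi b1)) \<in> N_coinv GL2"
    using hc3 hc2 unfolding N_coinv_def by (rule gen_diff)
  then show "Theta' (rel_P x y) \<in> N_coinv (GL2::'a::comm_ring_1 mat2 set)"
    unfolding hc1 by simp
qed



lemma Theta_N: "w \<in> N_RP \<Longrightarrow> Theta w \<in> N_coinv (SL2::'a::comm_ring_1 mat2 set)"
  unfolding N_RP_def
proof (induction w rule: gen_subgroup.induct)
  case gen_zero then show ?case by (simp add: Theta_def N_coinv_def gen_subgroup.gen_zero)
next
  case (gen_base r)
  then obtain g x y where "r = rel_RP g x y" "g dvd 1" "x \<in> Wset" "y \<in> Wset" "y * uinv x \<in> (Wset::'a set)" by blast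
  then show ?case using Theta_rel(1) by blast
next
  case (gen_diff x y)
  from gen_diff.IH show ?case unfolding Theta_diff N_coinv_def by (rule gen_subgroup.gen_diff)
qed

lemma Theta'_N: "w \<in> N_P \<Longrightarrow> Theta' w \<in> N_coinv (GL2::'a::comm_ring_1 mat2 set)"
  unfolding N_P_def
proof (induction w rule: gen_subgroup.induct)
  case gen_zero then show ?case by (simp add: Theta'_def N_coinv_def gen_subgroup.gen_zero)
next
  case (gen_base r)
  then obtain x y where "r = rel_P x y" "x \<in> Wset" "y \<in> Wset" "y * uinv x \<in> (Wset::'a set)" by blast
  then show ?case using Theta_rel(2)[of 1] by simp
next
  case (gen_diff x y)
  from gen_diff.IH show ?case unfolding Theta'_diff N_coinv_def by (rule gen_subgroup.gen_diff)
qed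

lemma Phi_of_Xn: "cs \<in> Xn 4 \<Longrightarrow> Phi (frag_of cs) = frag_of (sqclass (cls_arg cs), cr_arg cs)"
  by (simp add: Phi_def)

lemma Psi_of_Xn: "cs \<in> Xn 4 \<Longrightarrow> Psi (frag_of cs) = frag_of (cr_arg cs)"
  by (simp add: Psi_def)

lemma fwd_SL: "z \<in> N_coinv (SL2::'a::comm_ring_1 mat2 set) \<Longrightarrow> Phi z \<in> N_RP"
  unfolding N_coinv_def
proof (induction z rule: gen_subgroup.induct)
  case gen_zero then show ?case by (simp add: Phi_def N_RP_def gen_subgroup.gen_zero)
next
  case (gen_base r)
  then consider (b) cs where "r = bdry cs" "cs \<in> Xn 5"
    | (c) M cs where "r = conf_act M (frag_of cs) - frag_of cs" "M \<in> (SL2::'a mat2 set)" "cs \<in> Xn 4"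
    by blast
  then show ?case
  proof cases
    case b
    then obtain u0 u1 u2 u3 u4 where cs: "cs = map rclass [u0,u1,u2,u3,u4]" and g: "good [u0,u1,u2,u3,(u4::'a row)]"
      unfolding Xn5_iff by blast
    show ?thesis unfolding b(1) cs Phi_bdry[OF g] N_RP_def
      by (rule gen_subgroup.gen_base) (use rel_in[OF g] in blast)
  next
    case c
    have M: "mdet M = 1" using c(2) by (simp add: SL2_def)
    have Mu: "mdet M dvd 1" using M by simp
    have "Phi r = 0" unfolding c(1) Phi_diff equiv_face(1)[OF Mu c(3)] M Phi_of_Xn[OF c(3)]
      using M by (simp add: RP_act_of gact_sqclass)
    then show ?thesis by (simp add: N_RP_def gen_subgroup.gen_zero)
  qed
next
  case (gen_diff x y)
  from gen_diff.IH show ?case unfolding Phi_diff N_RP_def by (rule gen_subgroup.gen_diff)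
qed

lemma fwd_GL: "z \<in> N_coinv (GL2::'a::comm_ring_1 mat2 set) \<Longrightarrow> Psi z \<in> N_P"
  unfolding N_coinv_def
proof (induction z rule: gen_subgroup.induct)
  case gen_zero then show ?case by (simp add: Psi_def N_P_def gen_subgroup.gen_zero)
next
  case (gen_base r)
  then consider (b) cs where "r = bdry cs" "cs \<in> Xn 5"
    | (c) M cs where "r = conf_act M (frag_of cs) - frag_of cs" "M \<in> (GL2::'a mat2 set)" "cs \<in> Xn 4"
    by blast
  then show ?case
  proof cases
    case b
    then obtain u0 u1 u2 u3 u4 where cs: "cs = map rclass [u0,u1,u2,u3,u4]" and g: "good [u0,u1,u2,u3,(u4::'a row)]"
      unfolding Xn5_iff by blast
    show ?thesis unfolding b(1) cs Psi_bdry[OF g] N_P_def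
      by (rule gen_subgroup.gen_base) (use rel_in[OF g] in blast)
  next
    case c
    have M: "mdet M dvd 1" using c(2) by (simp add: GL2_def)
    have "Psi r = 0" unfolding c(1) Psi_diff equiv_face(2)[OF M c(3)] by simp
    then show ?thesis by (simp add: N_P_def gen_subgroup.gen_zero)
  qed
next
  case (gen_diff x y)
  from gen_diff.IH show ?case unfolding Psi_diff N_P_def by (rule gen_subgroup.gen_diff)
qed

lemma conf_act_diff: "conf_act M (a - b) = conf_act M a - conf_act M b"
  by (simp add: conf_act_def frag_extend_diff)
lemma RP_act_diff: "RP_act m (a - b) = RP_act m a - RP_act m b"
  by (simp add: RP_act_def frag_extend_diff)

lemma part3:
  assumes M: "M \<in> (GL2::'a::comm_ring_1 mat2 set)" and z: "z \<in> free_ab (Xn 4)"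
  shows "Phi (conf_act M z) - RP_act (mdet M) (Phi z) = 0"
proof -
  have k: "Poly_Mapping.keys z \<subseteq> Xn 4" using z by (simp add: free_ab_def)
  have Mu: "mdet M dvd 1" using M by (simp add: GL2_def)
  show ?thesis using k
  proof (induction z rule: frag_induction)
    case zero then show ?case by (simp add: Phi_def conf_act_def RP_act_def)
  next
    case (one x) then show ?case using equiv_face(1)[OF Mu] by simp
  next
    case (diff a b) then show ?case
      by (simp add: conf_act_diff RP_act_diff Phi_diff algebra_simps)
  qed
qed

lemma part2:
  assumes "w \<in> free_ab (G_A \<times> (Wset :: 'a::comm_ring_1 set))"
  shows "\<exists>z \<in> free_ab (Xn 4). w - Phi z \<in> N_RP"
proof -
  have k: "Poly_Mapping.keys w \<subseteq> G_A \<times> Wset" using assms by (simp add: free_ab_def)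
  show ?thesis using k
  proof (induction w rule: frag_induction)
    case zero then show ?case
      by (intro bexI[of _ 0]) (simp_all add: Phi_def N_RP_def gen_subgroup.gen_zero fa_zero)
  next
    case (one p)
    then obtain g x where p: "p = (g, x)" "g \<in> G_A" "x \<in> (Wset::'a set)" by blast
    then obtain c where c: "c dvd 1" "g = sqclass c" by (auto simp: G_A_def units_def)
    have r: "repG g dvd 1" "sqclass (repG g) = g" using repG[OF c(1)] c(2) by simp_all
    have "Phi (frag_of (map rclass (std (repG g) x))) = frag_of p"
      using Phi_std[OF r(1) p(3)] r(2) p(1) by simp
    then show ?case
      by (intro bexI[of _ "frag_of (map rclass (std (repG g) x))"] fa_of std_Xn r(1) p(3))
         (simp add: N_RP_def gen_subgroup.gen_zero)
  next
    case (diff a b)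
    then obtain za zb where z: "za \<in> free_ab (Xn 4)" "a - Phi za \<in> N_RP" "zb \<in> free_ab (Xn 4)" "b - Phi zb \<in> N_RP"
      by blast
    have "(a - Phi za) - (b - Phi zb) \<in> N_RP" using z(2,4) unfolding N_RP_def by (rule gen_subgroup.gen_diff)
    moreover have "(a - Phi za) - (b - Phi zb) = (a - b) - Phi (za - zb)" by (simp add: Phi_diff algebra_simps)
    ultimately show ?case using fa_diff[OF z(1,3)] by (intro bexI[of _ "za - zb"]) simp_all
  qed
qed

lemma part5:
  assumes "w \<in> free_ab (Wset :: 'a::comm_ring_1 set)"
  shows "\<exists>z \<in> free_ab (Xn 4). w - Psi z \<in> N_P"
proof -
  have k: "Poly_Mapping.keys w \<subseteq> Wset" using assms by (simp add: free_ab_def)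
  show ?thesis using k
  proof (induction w rule: frag_induction)
    case zero then show ?case
      by (intro bexI[of _ 0]) (simp_all add: Psi_def N_P_def gen_subgroup.gen_zero fa_zero)
  next
    case (one x)
    have "Psi (frag_of (map rclass (std 1 x))) = frag_of x" using Psi_std[OF _ one] by simp
    then show ?case
      by (intro bexI[of _ "frag_of (map rclass (std 1 x))"] fa_of std_Xn one)
         (simp_all add: N_P_def gen_subgroup.gen_zero)
  next
    case (diff a b)
    then obtain za zb where z: "za \<in> free_ab (Xn 4)" "a - Psi za \<in> N_P" "zb \<in> free_ab (Xn 4)" "b - Psi zb \<in> N_P"
      by blast
    have "(a - Psi za) - (b - Psi zb) \<in> N_P" using z(2,4) unfolding N_P_def by (rule gen_subgroup.gen_diff)
    moreover have "(a - Psi za) - (b - Psi zb) = (a - b) - Psi (za - zb)" by (simp add: Psi_diff algebra_simps)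
    ultimately show ?case using fa_diff[OF z(1,3)] by (intro bexI[of _ "za - zb"]) simp_all
  qed
qed

theorem mainTheorem14:
  assumes "infinite (UNIV :: 'a::comm_ring_1 set) \<or> card (UNIV :: 'a set) \<ge> 4"
  shows
    "(\<forall>z \<in> free_ab (Xn 4 :: 'a row set list set).
        z \<in> N_coinv SL2 \<longleftrightarrow> Phi z \<in> N_RP)
   \<and> (\<forall>w \<in> free_ab (G_A \<times> (Wset :: 'a set)).
        \<exists>z \<in> free_ab (Xn 4). w - Phi z \<in> N_RP)
   \<and> (\<forall>M \<in> (GL2 :: 'a mat2 set). \<forall>z \<in> free_ab (Xn 4).
        Phi (conf_act M z) - RP_act (mdet M) (Phi z) \<in> N_RP)
   \<and> (\<forall>z \<in> free_ab (Xn 4 :: 'a row set list set).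
        z \<in> N_coinv GL2 \<longleftrightarrow> Psi z \<in> N_P)
   \<and> (\<forall>w \<in> free_ab (Wset :: 'a set).
        \<exists>z \<in> free_ab (Xn 4). w - Psi z \<in> N_P)"
proof (intro conjI ballI)
  fix z :: "'a row set list \<Rightarrow>\<^sub>0 int" assume z: "z \<in> free_ab (Xn 4)"
  show "z \<in> N_coinv SL2 \<longleftrightarrow> Phi z \<in> N_RP"
  proof
    assume "z \<in> N_coinv SL2" then show "Phi z \<in> N_RP" by (rule fwd_SL)
  next
    assume "Phi z \<in> N_RP"
    then have "Theta (Phi z) \<in> N_coinv (SL2::'a mat2 set)" by (rule Theta_N)
    moreover have "z - Theta (Phi z) \<in> N_coinv SL2" by (rule E3(1)[OF z])
    ultimately have "(z - Theta (Phi z)) + Theta (Phi z) \<in> N_coinv SL2"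
      unfolding N_coinv_def by (intro gen_add)
    then show "z \<in> N_coinv SL2" by simp
  qed
next
  fix w :: "('a set \<times> 'a) \<Rightarrow>\<^sub>0 int" assume "w \<in> free_ab (G_A \<times> Wset)"
  then show "\<exists>z \<in> free_ab (Xn 4). w - Phi z \<in> N_RP" by (rule part2)
next
  fix M :: "'a mat2" and z :: "'a row set list \<Rightarrow>\<^sub>0 int" assume "M \<in> GL2" "z \<in> free_ab (Xn 4)"
  then have "Phi (conf_act M z) - RP_act (mdet M) (Phi z) = 0" by (rule part3)
  then show "Phi (conf_act M z) - RP_act (mdet M) (Phi z) \<in> N_RP"
    by (simp add: N_RP_def gen_subgroup.gen_zero)
next
  fix z :: "'a row set list \<Rightarrow>\<^sub>0 int" assume z: "z \<in> free_ab (Xn 4)"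
  show "z \<in> N_coinv GL2 \<longleftrightarrow> Psi z \<in> N_P"
  proof
    assume "z \<in> N_coinv GL2" then show "Psi z \<in> N_P" by (rule fwd_GL)
  next
    assume "Psi z \<in> N_P"
    then have "Theta' (Psi z) \<in> N_coinv (GL2::'a mat2 set)" by (rule Theta'_N)
    moreover have "z - Theta' (Psi z) \<in> N_coinv GL2" by (rule E3(2)[OF z])
    ultimately have "(z - Theta' (Psi z)) + Theta' (Psi z) \<in> N_coinv GL2"
      unfolding N_coinv_def by (intro gen_add)
    then show "z \<in> N_coinv GL2" by simp
  qed
next
  fix w :: "'a \<Rightarrow>\<^sub>0 int" assume "w \<in> free_ab Wset"
  then show "\<exists>z \<in> free_ab (Xn 4). w - Psi z \<in> N_P" by (rule part5)
qed

end
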